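(* Let $m,n,r$ be positive integers with $\gcd(m,n)=\gcd(m,r-1)=1$, $r^n\equiv 1 \pmod m$, and $m=p_1^{\alpha_1}p_2^{\alpha_2}\cdots p_k^{\alpha_k}$ with $k\ge 1$, $p_1,\dots,p_k$ distinct primes and $\alpha_i\ge 1$. Let $I=\{1,\dots,k\}$. For each nonempty $T\subseteq I$ let $e_T=\operatorname{lcm}_{i\in T}\operatorname{ord}_{p_i^{\alpha_i}}(r)$, where $\operatorname{ord}_{p_i^{\alpha_i}}(r)$ is the multiplicative order of $r$ modulo $p_i^{\alpha_i}$ (equivalently, $e_T$ is the least positive integer $e$ with $r^{e}\equiv 1 \pmod{p_i^{\alpha_i}}$ for all $i\in T$; it divides $n$). Then $$\psi(ZM(m,n,r))=m\,\psi(\mathbb{Z}_n)+\sum_{\emptyset\neq T\subseteq I}\ \prod_{i\in I\setminus T}p_i^{\alpha_i}\ \prod_{i\in T}\big(\psi(\mathbb{Z}_{p_i^{\alpha_i}})-p_i^{\alpha_i}\big)\ \psi\big(\langle b^{e_T}\rangle\big),$$ where $\langle b^{e_T}\rangle\cong\mathbb{Z}_{n/e_T}$ is the subgroup of $ZM(m,n,r)$ generated by $b^{e_T}$ (it is the centralizer in $\langle b\rangle$ of the subgroup of $\langle a\rangle$ of order $\prod_{i\in T}p_i^{\alpha_i}$). Here $\psi(\mathbb{Z}_{p^{\alpha}})=\frac{p^{2\alpha+1}+1}{p+1}$.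
   Context: For a finite group $G$, $\psi(G)=\sum_{x\in G} o(x)$ denotes the sum of the orders of all elements of $G$. For positive integers $m,n,r$ with $\gcd(m,n)=\gcd(m,r-1)=1$ and $r^n\equiv 1\pmod m$, the ZM-group is $ZM(m,n,r)=\langle a,b \mid a^m=b^n=1,\ b^{-1}ab=a^r\rangle$, a group of order $mn$ (these are exactly the finite groups all of whose Sylow subgroups are cyclic; $m$ is necessarily odd). *)

theory Defs
  imports "HOL-Algebra.Algebra" "HOL-Number_Theory.Number_Theory"
begin

definition psi :: "('a, 'b) monoid_scheme \<Rightarrow> nat" where
  "psi G = (\<Sum>x\<in>carrier G. group.ord G x)"

text \<open>Sum of element orders of a subgroup H of G (the order of an element of H
  computed in H agrees with its order in G).\<close>
definition psi_sub :: "('a, 'b) monoid_scheme \<Rightarrow> 'a set \<Rightarrow> nat" where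
  "psi_sub G H = psi (G\<lparr>carrier := H\<rparr>)"

text \<open>Concrete model of ZM(m,n,r) = <a,b | a^m = b^n = 1, b^-1 a b = a^r>:
  the pair (j,i) with j < n, i < m stands for b^j a^i.  Since
  a^i b^l = b^l a^(i r^l), we get (b^j a^i)(b^l a^k) = b^(j+l) a^(i r^l + k).\<close>
definition ZM :: "nat \<Rightarrow> nat \<Rightarrow> nat \<Rightarrow> (nat \<times> nat) monoid" where
  "ZM m n r = \<lparr> carrier = {0..<n} \<times> {0..<m},
     monoid.mult = (\<lambda>(j, i) (l, k). ((j + l) mod n, (i * r ^ l + k) mod m)),
     monoid.one = (0, 0) \<rparr>"

definition ZM_a :: "nat \<Rightarrow> nat \<Rightarrow> nat \<times> nat" where
  "ZM_a m n = (0, 1 mod m)"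

definition ZM_b :: "nat \<Rightarrow> nat \<Rightarrow> nat \<times> nat" where
  "ZM_b m n = (1 mod n, 0)"

end

theory Submission
  imports Defs
begin

lemma ord_from:
  assumes "group G" "\<And>t::nat. x [^]\<^bsub>G\<^esub> t = \<one>\<^bsub>G\<^esub> \<longleftrightarrow> N dvd t"
  shows "group.ord G x = N"
  unfolding group.ord_def[OF assms(1)]
proof (rule some_equality)
  show "\<forall>t::nat. x [^]\<^bsub>G\<^esub> t = \<one>\<^bsub>G\<^esub> \<longleftrightarrow> N dvd t" using assms(2) by blast
next
  fix d assume "\<forall>t::nat. x [^]\<^bsub>G\<^esub> t = \<one>\<^bsub>G\<^esub> \<longleftrightarrow> d dvd t"
  then have "d dvd N" "N dvd d" using assms(2) by auto
  then show "d = N" by (rule dvd_antisym)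
qed

lemma dvd_mult_iff_div_gcd:
  fixes q t y :: nat
  assumes "q > 0"
  shows "q dvd t * y \<longleftrightarrow> q div gcd q y dvd t"
proof -
  define g where "g = gcd q y"
  have g0: "g > 0" using assms by (simp add: g_def)
  obtain q' y' where q': "q = g * q'" "y = g * y'" unfolding g_def by (meson gcd_dvd1 gcd_dvd2 dvdE)
  have cop: "coprime q' y'"
    using q' g0 by (metis g_def div_gcd_coprime gcd_eq_0_iff nonzero_mult_div_cancel_left not_gr0)
  have "q dvd t * y \<longleftrightarrow> q' dvd t * y'" using q' g0 by (simp add: mult.left_commute)
  also have "\<dots> \<longleftrightarrow> q' dvd t" using cop by (simp add: coprime_dvd_mult_left_iff)
  also have "q' = q div g" using q' g0 by simp
  finally show ?thesis by (simp add: g_def)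
qed

lemma prod_dvd_iff_pairwise_coprime:
  fixes d :: "'i \<Rightarrow> nat"
  assumes "finite I" "\<forall>a\<in>I. \<forall>b\<in>I. a \<noteq> b \<longrightarrow> coprime (d a) (d b)"
  shows "(\<Prod>l\<in>I. d l) dvd z \<longleftrightarrow> (\<forall>l\<in>I. d l dvd z)"
  using assms
proof (induction I rule: finite_induct)
  case empty
  then show ?case by simp
next
  case (insert a I)
  have cop: "coprime (d a) (\<Prod>l\<in>I. d l)"
    using insert by (metis insert_iff prod_coprime_right)
  have "(\<Prod>l\<in>insert a I. d l) dvd z \<longleftrightarrow> d a dvd z \<and> (\<Prod>l\<in>I. d l) dvd z"
    using insert cop by (auto intro: divides_mult dest: dvd_mult_left dvd_mult_right)
  then show ?case using insert by auto
qed

lemma crt_sum: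
  fixes a b :: nat and F H :: "nat \<Rightarrow> nat"
  assumes "coprime a b" "a > 0" "b > 0"
  shows "(\<Sum>i<a*b. F (i mod a) * H (i mod b)) = (\<Sum>x<a. F x) * (\<Sum>y<b. H y)"
proof -
  let ?f = "\<lambda>i. (i mod a, i mod b)"
  have inj: "inj_on ?f {..<a*b}"
  proof
    fix x y assume xy: "x \<in> {..<a*b}" "y \<in> {..<a*b}" "?f x = ?f y"
    then have "[x = y] (mod a)" "[x = y] (mod b)" by (auto simp: cong_def)
    then have "[x = y] (mod a*b)" using assms(1) by (simp add: cong_le_nat coprime_cong_mult_nat)
    then show "x = y" using xy by (auto simp: cong_def)
  qed
  have sub: "?f ` {..<a*b} \<subseteq> {..<a} \<times> {..<b}" using assms by auto
  have "card (?f ` {..<a*b}) = card ({..<a} \<times> {..<b})"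
    using inj by (simp add: card_image card_cartesian_product)
  then have bij: "?f ` {..<a*b} = {..<a} \<times> {..<b}"
    using sub by (intro card_subset_eq) auto
  have "(\<Sum>i<a*b. F (i mod a) * H (i mod b)) = (\<Sum>z\<in>?f ` {..<a*b}. F (fst z) * H (snd z))"
    using inj by (simp add: sum.reindex)
  also have "\<dots> = (\<Sum>z\<in>{..<a} \<times> {..<b}. F (fst z) * H (snd z))" using bij by simp
  also have "\<dots> = (\<Sum>(x,y)\<in>{..<a} \<times> {..<b}. F x * H y)"
    by (simp add: split_def)
  also have "\<dots> = (\<Sum>x<a. \<Sum>y<b. F x * H y)"
    by (rule sum.cartesian_product[symmetric])
  also have "\<dots> = (\<Sum>x<a. F x) * (\<Sum>y<b. H y)"
    by (simp add: sum_product)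
  finally show ?thesis .
qed

lemma crt_sum_prod:
  fixes q :: "'i \<Rightarrow> nat" and F :: "'i \<Rightarrow> nat \<Rightarrow> nat"
  assumes "finite I" "\<forall>a\<in>I. \<forall>b\<in>I. a \<noteq> b \<longrightarrow> coprime (q a) (q b)" "\<forall>l\<in>I. q l > 0"
  shows "(\<Sum>i<(\<Prod>l\<in>I. q l). \<Prod>l\<in>I. F l (i mod q l)) = (\<Prod>l\<in>I. \<Sum>x<q l. F l x)"
  using assms
proof (induction I rule: finite_induct)
  case empty
  then show ?case by simp
next
  case (insert a I)
  let ?M = "\<Prod>l\<in>I. q l"
  have cop: "coprime (q a) ?M"
    using insert by (metis insert_iff prod_coprime_right)
  have M0: "?M > 0" using insert by simp
  have "(\<Sum>i<(\<Prod>l\<in>insert a I. q l). \<Prod>l\<in>insert a I. F l (i mod q l))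
      = (\<Sum>i<q a * ?M. F a (i mod q a) * (\<lambda>y. \<Prod>l\<in>I. F l (y mod q l)) (i mod ?M))"
  proof (rule sum.cong)
    fix i
    have "\<And>l. l \<in> I \<Longrightarrow> i mod ?M mod q l = i mod q l"
      using insert by (simp add: mod_mod_cancel dvd_prodI)
    then show "(\<Prod>l\<in>insert a I. F l (i mod q l)) = F a (i mod q a) * (\<lambda>y. \<Prod>l\<in>I. F l (y mod q l)) (i mod ?M)"
      using insert by simp
  qed (use insert in simp)
  also have "\<dots> = (\<Sum>x<q a. F a x) * (\<Sum>y<?M. \<Prod>l\<in>I. F l (y mod q l))"
    using cop M0 insert by (intro crt_sum) auto
  also have "\<dots> = (\<Prod>l\<in>insert a I. \<Sum>x<q l. F l x)"
    using insert by simp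
  finally show ?case .
qed

locale zmc =
  fixes m n r k :: nat and p \<alpha> :: "nat \<Rightarrow> nat"
  assumes m0: "m > 0" and n0: "n > 0" and r0: "r > 0"
    and cmn: "gcd m n = 1" and cmr: "gcd m (r - 1) = 1"
    and rn: "[r ^ n = 1] (mod m)"
    and k1: "k \<ge> 1"
    and pr: "\<forall>i\<in>{1..k}. Factorial_Ring.prime (p i)"
    and pinj: "inj_on p {1..k}"
    and al: "\<forall>i\<in>{1..k}. \<alpha> i \<ge> 1"
    and mprod: "m = (\<Prod>i\<in>{1..k}. p i ^ \<alpha> i)"
begin

definition qq :: "nat \<Rightarrow> nat" where "qq l = p l ^ \<alpha> l"

lemma mprod': "m = (\<Prod>l\<in>{1..k}. qq l)" using mprod by (simp add: qq_def)

lemma qq_pos: "l \<in> {1..k} \<Longrightarrow> qq l > 0"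
  using pr by (simp add: qq_def prime_gt_0_nat)

lemma qq_dvd: "l \<in> {1..k} \<Longrightarrow> qq l dvd m"
  unfolding mprod' by (rule dvd_prodI) auto

lemma qq_cop: "a \<in> {1..k} \<Longrightarrow> b \<in> {1..k} \<Longrightarrow> a \<noteq> b \<Longrightarrow> coprime (qq a) (qq b)"
proof -
  assume ab: "a \<in> {1..k}" "b \<in> {1..k}" "a \<noteq> b"
  then have "p a \<noteq> p b" using pinj unfolding inj_on_def by blast
  then have "coprime (p a) (p b)" using pr ab by (simp add: primes_coprime)
  then show ?thesis by (simp add: qq_def)
qed

lemma qq_cop_n: "l \<in> {1..k} \<Longrightarrow> coprime (qq l) n"
proof -
  assume l: "l \<in> {1..k}"
  have "coprime m n" using cmn by (simp only: coprime_iff_gcd_eq_1)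
  then show ?thesis using qq_dvd[OF l] by (intro coprime_divisors[of "qq l" m n n]) auto
qed

lemma p_ndvd_n: "l \<in> {1..k} \<Longrightarrow> \<not> p l dvd n"
proof
  assume l: "l \<in> {1..k}" and d: "p l dvd n"
  have "p l dvd qq l" proof -
    have "\<alpha> l \<ge> 1" using al l by blast
    then show ?thesis unfolding qq_def by (intro dvd_power) auto
  qed
  then have "p l dvd gcd (qq l) n" using d by simp
  then have "p l dvd 1" using qq_cop_n[OF l] by (simp only: coprime_iff_gcd_eq_1)
  moreover have "Factorial_Ring.prime (p l)" using pr l by blast
  ultimately show False by simp
qed

lemma rpow_mod: "r ^ (x mod n) mod m = r ^ x mod m"
proof -
  have "r ^ x = r ^ (n * (x div n) + x mod n)" by simp
  also have "\<dots> = (r ^ n) ^ (x div n) * r ^ (x mod n)" by (simp only: power_add power_mult)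
  finally have e: "r ^ x = (r ^ n) ^ (x div n) * r ^ (x mod n)" .
  have "[(r ^ n) ^ (x div n) = 1 ^ (x div n)] (mod m)" by (rule cong_pow[OF rn])
  then have "[(r ^ n) ^ (x div n) * r ^ (x mod n) = 1 * r ^ (x mod n)] (mod m)"
    by (intro cong_mult cong_refl) simp
  then show ?thesis unfolding e by (simp add: cong_def)
qed

lemma rpow_cong: "n dvd x \<Longrightarrow> [r ^ x = 1] (mod m)"
  using rpow_mod[of x] by (simp add: cong_def)

lemma group_ZM: "group (ZM m n r)"
proof (rule groupI)
  fix x y assume "x \<in> carrier (ZM m n r)" "y \<in> carrier (ZM m n r)"
  then show "x \<otimes>\<^bsub>ZM m n r\<^esub> y \<in> carrier (ZM m n r)"
    using m0 n0 by (auto simp: ZM_def split: prod.splits)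
next
  show "\<one>\<^bsub>ZM m n r\<^esub> \<in> carrier (ZM m n r)" using m0 n0 by (simp add: ZM_def)
next
  fix x y z assume "x \<in> carrier (ZM m n r)" "y \<in> carrier (ZM m n r)" "z \<in> carrier (ZM m n r)"
  obtain j i where x: "x = (j, i)" by fastforce
  obtain l kk where y: "y = (l, kk)" by fastforce
  obtain s t where z: "z = (s, t)" by fastforce
  have e1: "((j + l) mod n + s) mod n = (j + (l + s) mod n) mod n"
    by (simp add: mod_add_left_eq mod_add_right_eq add.assoc)
  have "[(i * r ^ l + kk) mod m * r ^ s + t = (i * r ^ l + kk) * r ^ s + t] (mod m)"
    by (intro cong_add cong_mult cong_refl) (simp add: cong_def)
  also have "(i * r ^ l + kk) * r ^ s + t = i * r ^ (l + s) + kk * r ^ s + t"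
    by (simp add: algebra_simps power_add)
  finally have c1: "[(i * r ^ l + kk) mod m * r ^ s + t = i * r ^ (l + s) + kk * r ^ s + t] (mod m)" .
  have "[r ^ ((l + s) mod n) = r ^ (l + s)] (mod m)" using rpow_mod by (simp add: cong_def)
  then have "[i * r ^ ((l + s) mod n) + (kk * r ^ s + t) mod m = i * r ^ (l + s) + (kk * r ^ s + t)] (mod m)"
    by (intro cong_add cong_mult cong_refl) (simp_all add: cong_def)
  then have c2: "[i * r ^ ((l + s) mod n) + (kk * r ^ s + t) mod m = i * r ^ (l + s) + kk * r ^ s + t] (mod m)"
    by (simp add: add.assoc)
  have e2: "((i * r ^ l + kk) mod m * r ^ s + t) mod m = (i * r ^ ((l + s) mod n) + (kk * r ^ s + t) mod m) mod m"
    using c1 c2 unfolding cong_def by simp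
  show "x \<otimes>\<^bsub>ZM m n r\<^esub> y \<otimes>\<^bsub>ZM m n r\<^esub> z = x \<otimes>\<^bsub>ZM m n r\<^esub> (y \<otimes>\<^bsub>ZM m n r\<^esub> z)"
    using e1 e2 by (simp add: ZM_def x y z)
next
  fix x assume "x \<in> carrier (ZM m n r)"
  then show "\<one>\<^bsub>ZM m n r\<^esub> \<otimes>\<^bsub>ZM m n r\<^esub> x = x"
    by (auto simp: ZM_def)
next
  fix x assume x: "x \<in> carrier (ZM m n r)"
  obtain j i where xe: "x = (j, i)" by fastforce
  have ji: "j < n" "i < m" using x xe by (auto simp: ZM_def)
  define l where "l = (n - j) mod n"
  define kk where "kk = ((m - i) * r ^ l) mod m"
  have lj: "(l + j) mod n = 0" using ji unfolding l_def by (cases "j = 0") auto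
  have c1: "[kk = (m - i) * r ^ l] (mod m)" by (simp add: kk_def cong_def)
  have c2: "[r ^ l * r ^ j = 1] (mod m)"
    using rpow_mod[of "l + j"] lj by (simp add: cong_def power_add)
  have "[kk * r ^ j + i = (m - i) * r ^ l * r ^ j + i] (mod m)"
    by (intro cong_add cong_mult cong_refl c1)
  also have "(m - i) * r ^ l * r ^ j + i = (m - i) * (r ^ l * r ^ j) + i" by (simp add: mult.assoc)
  also have "[\<dots> = (m - i) * 1 + i] (mod m)"
    by (intro cong_add cong_mult cong_refl c2)
  also have "(m - i) * 1 + i = m" using ji by simp
  finally have "(kk * r ^ j + i) mod m = 0" by (simp add: cong_def)
  moreover have "(l, kk) \<in> carrier (ZM m n r)" using n0 m0 by (simp add: ZM_def l_def kk_def)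
  moreover have "(l, kk) \<otimes>\<^bsub>ZM m n r\<^esub> x = \<one>\<^bsub>ZM m n r\<^esub>"
    using lj \<open>(kk * r ^ j + i) mod m = 0\<close> by (simp add: ZM_def xe)
  ultimately show "\<exists>y\<in>carrier (ZM m n r). y \<otimes>\<^bsub>ZM m n r\<^esub> x = \<one>\<^bsub>ZM m n r\<^esub>"
    by blast
qed

lemma pow_ZM: "(j, i) [^]\<^bsub>ZM m n r\<^esub> (t::nat) = (t * j mod n, i * (\<Sum>s<t. r ^ (j * s)) mod m)"
proof (induction t)
  case 0
  then show ?case by (simp add: ZM_def)
next
  case (Suc t)
  have s: "(\<Sum>s<Suc t. r ^ (j * s)) = 1 + r ^ j * (\<Sum>s<t. r ^ (j * s))"
    unfolding sum.lessThan_Suc_shift by (simp add: sum_distrib_left power_add del: sum.lessThan_Suc)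
  have "(j, i) [^]\<^bsub>ZM m n r\<^esub> Suc t = (t * j mod n, i * (\<Sum>s<t. r ^ (j * s)) mod m) \<otimes>\<^bsub>ZM m n r\<^esub> (j, i)"
    using Suc by simp
  also have "\<dots> = ((t * j mod n + j) mod n, ((i * (\<Sum>s<t. r ^ (j * s)) mod m) * r ^ j + i) mod m)"
    by (simp add: ZM_def)
  also have "(t * j mod n + j) mod n = Suc t * j mod n"
  proof -
    have "(t * j mod n + j) mod n = (t * j + j) mod n" by (rule mod_add_left_eq)
    then show ?thesis by (simp add: add.commute)
  qed
  also have "((i * (\<Sum>s<t. r ^ (j * s)) mod m) * r ^ j + i) mod m = i * (\<Sum>s<Suc t. r ^ (j * s)) mod m"
  proof -
    have "[(i * (\<Sum>s<t. r ^ (j * s)) mod m) * r ^ j + i = i * (\<Sum>s<t. r ^ (j * s)) * r ^ j + i] (mod m)"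
      by (intro cong_add cong_mult cong_refl) (simp add: cong_def)
    moreover have "i * (\<Sum>s<t. r ^ (j * s)) * r ^ j + i = i * (\<Sum>s<Suc t. r ^ (j * s))"
      unfolding s by (simp add: algebra_simps)
    ultimately show ?thesis by (simp add: cong_def)
  qed
  finally show ?case .
qed

end

context zmc begin

definition gf :: "nat \<Rightarrow> nat \<Rightarrow> nat \<Rightarrow> nat" where
  "gf j l x = (if [r ^ j = 1] (mod qq l) then qq l div gcd (qq l) x else 1)"

lemma lift_cong:
  assumes l: "l \<in> {1..k}" and un: "[u ^ n = 1] (mod qq l)" and u1: "[u = 1] (mod p l)"
  shows "[u = 1] (mod qq l)"
proof -
  define P where "P = int (p l)"
  define Q where "Q = int (qq l)"
  define U where "U = int u"
  have primeP: "Factorial_Ring.prime P" using pr l by (simp add: P_def prime_nat_int_transfer)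
  have QP: "Q = P ^ \<alpha> l" by (simp add: Q_def P_def qq_def)
  have h1: "U ^ n - 1 = (U - 1) * (\<Sum>s<n. U ^ s)" by (rule power_diff_1_eq)
  have h2: "[U = 1] (mod P)"
  proof -
    have "[int u = int 1] (mod int (p l))" using u1 by (simp only: cong_int_iff)
    then show ?thesis by (simp add: U_def P_def)
  qed
  have h3: "[(\<Sum>s<n. U ^ s) = (\<Sum>s<n. 1)] (mod P)"
  proof (rule cong_sum)
    fix s show "[U ^ s = 1] (mod P)" using cong_pow[OF h2, of s] by simp
  qed
  have h4: "\<not> P dvd (\<Sum>s<n. U ^ s)"
  proof
    assume "P dvd (\<Sum>s<n. U ^ s)"
    then have "P dvd (\<Sum>s<n. (1::int))" using cong_dvd_iff[OF h3] by simp
    then have "int (p l) dvd int n" by (simp add: P_def)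
    then have "p l dvd n" by (simp only: of_nat_dvd_iff)
    then show False using p_ndvd_n[OF l] by simp
  qed
  have "coprime P (\<Sum>s<n. U ^ s)" by (rule prime_imp_coprime[OF primeP h4])
  then have cop: "coprime Q (\<Sum>s<n. U ^ s)" unfolding QP
    by (simp add: coprime_power_left_iff)
  have "[int (u ^ n) = int 1] (mod int (qq l))" using un by (simp only: cong_int_iff)
  then have "[U ^ n = 1] (mod Q)" by (simp add: U_def Q_def)
  then have "Q dvd U ^ n - 1" by (simp add: cong_iff_dvd_diff)
  then have "Q dvd (U - 1) * (\<Sum>s<n. U ^ s)" using h1 by simp
  then have "Q dvd U - 1" using cop by (simp add: coprime_dvd_mult_left_iff)
  then have "[U = 1] (mod Q)" by (simp add: cong_iff_dvd_diff)
  then have "[int u = int 1] (mod int (qq l))" by (simp add: U_def Q_def)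
  then show ?thesis by (simp only: cong_int_iff)
qed

lemma div_cond:
  assumes l: "l \<in> {1..k}" and ntj: "n dvd t * j"
  shows "qq l dvd i * (\<Sum>s<t. r ^ (j * s)) \<longleftrightarrow> gf j l i dvd t"
proof (cases "[r ^ j = 1] (mod qq l)")
  case True
  have "[(\<Sum>s<t. r ^ (j * s)) = (\<Sum>s<t. 1)] (mod qq l)"
  proof (rule cong_sum)
    fix s show "[r ^ (j * s) = 1] (mod qq l)"
      using cong_pow[OF True, of s] by (simp add: power_mult)
  qed
  then have "[i * (\<Sum>s<t. r ^ (j * s)) = i * t] (mod qq l)"
    by (simp add: cong_scalar_left)
  then have "[i * (\<Sum>s<t. r ^ (j * s)) = t * i] (mod qq l)"
    by (simp add: mult.commute)
  then have "qq l dvd i * (\<Sum>s<t. r ^ (j * s)) \<longleftrightarrow> qq l dvd t * i"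
    by (rule cong_dvd_iff)
  also have "\<dots> \<longleftrightarrow> qq l div gcd (qq l) i dvd t"
    using qq_pos[OF l] by (rule dvd_mult_iff_div_gcd)
  finally show ?thesis using True by (simp add: gf_def)
next
  case False
  define P where "P = int (p l)"
  define Q where "Q = int (qq l)"
  define U where "U = int (r ^ j)"
  define S where "S = (\<Sum>s<t. r ^ (j * s))"
  have primeP: "Factorial_Ring.prime P" using pr l by (simp add: P_def prime_nat_int_transfer)
  have QP: "Q = P ^ \<alpha> l" by (simp add: Q_def P_def qq_def)
  have h1: "U ^ t - 1 = (U - 1) * (\<Sum>s<t. U ^ s)" by (rule power_diff_1_eq)
  have h1': "(\<Sum>s<t. U ^ s) = int S" by (simp add: U_def S_def power_mult)
  have "[r ^ (j * t) = 1] (mod m)" using ntj by (intro rpow_cong) (simp add: mult.commute)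
  then have "[r ^ (j * t) = 1] (mod qq l)" using qq_dvd[OF l] by (rule cong_dvd_modulus_nat)
  then have "[int (r ^ (j * t)) = int 1] (mod int (qq l))" by (simp only: cong_int_iff)
  then have "[U ^ t = 1] (mod Q)" by (simp add: U_def Q_def power_mult)
  then have d1: "Q dvd (U - 1) * int S" using h1 h1' by (simp add: cong_iff_dvd_diff)
  have "\<not> P dvd U - 1"
  proof
    assume "P dvd U - 1"
    then have "[U = 1] (mod P)" by (simp add: cong_iff_dvd_diff)
    then have "[int (r ^ j) = int 1] (mod int (p l))" by (simp add: U_def P_def)
    then have c: "[r ^ j = 1] (mod p l)" by (simp only: cong_int_iff)
    have "[r ^ (n * j) = 1] (mod m)" by (intro rpow_cong) simp
    then have "[(r ^ j) ^ n = 1] (mod qq l)" using qq_dvd[OF l]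
      by (simp add: power_mult[symmetric] mult.commute cong_dvd_modulus_nat)
    then have "[r ^ j = 1] (mod qq l)" using lift_cong[OF l _ c] by blast
    then show False using False by blast
  qed
  then have "coprime P (U - 1)" by (rule prime_imp_coprime[OF primeP])
  then have "coprime Q (U - 1)" unfolding QP by (simp add: coprime_power_left_iff)
  then have "Q dvd int S" using d1 by (simp add: coprime_dvd_mult_right_iff)
  then have "qq l dvd S" by (simp add: Q_def)
  then show ?thesis using False by (simp add: gf_def S_def)
qed

lemma div_dvd_self':
  fixes q g :: nat
  assumes "g dvd q" shows "q div g dvd q"
  using assms by (cases "g = 0") (auto elim!: dvdE)

lemma gf_dvd: "gf j l x dvd qq l"
  by (simp add: gf_def div_dvd_self')

lemma ord_ZM:
  assumes "j < n" "i < m"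
  shows "group.ord (ZM m n r) (j, i) = (n div gcd n j) * (\<Prod>l\<in>{1..k}. gf j l i)"
proof (rule ord_from[OF group_ZM])
  fix t :: nat
  define a where "a = n div gcd n j"
  define S where "S = (\<Sum>s<t. r ^ (j * s))"
  have one: "\<one>\<^bsub>ZM m n r\<^esub> = (0, 0)" by (simp add: ZM_def)
  have "(j, i) [^]\<^bsub>ZM m n r\<^esub> t = \<one>\<^bsub>ZM m n r\<^esub> \<longleftrightarrow> n dvd t * j \<and> m dvd i * S"
    unfolding one pow_ZM S_def by auto
  also have "\<dots> \<longleftrightarrow> a dvd t \<and> (\<forall>l\<in>{1..k}. gf j l i dvd t)"
  proof -
    have e1: "n dvd t * j \<longleftrightarrow> a dvd t" unfolding a_def using n0 by (rule dvd_mult_iff_div_gcd)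
    have e2: "m dvd i * S \<longleftrightarrow> (\<forall>l\<in>{1..k}. qq l dvd i * S)"
    proof -
      have "m dvd i * S \<longleftrightarrow> (\<Prod>l\<in>{1..k}. qq l) dvd i * S" using mprod' by simp
      also have "\<dots> \<longleftrightarrow> (\<forall>l\<in>{1..k}. qq l dvd i * S)"
        by (rule prod_dvd_iff_pairwise_coprime) (use qq_cop in blast)+
      finally show ?thesis .
    qed
    show ?thesis using e1 e2 div_cond unfolding S_def by blast
  qed
  also have "\<dots> \<longleftrightarrow> a * (\<Prod>l\<in>{1..k}. gf j l i) dvd t"
  proof -
    have pc: "\<forall>x\<in>{1..k}. \<forall>y\<in>{1..k}. x \<noteq> y \<longrightarrow> coprime (gf j x i) (gf j y i)"
    proof (intro ballI impI)
      fix x y assume "x \<in> {1..k}" "y \<in> {1..k}" "x \<noteq> y"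
      then show "coprime (gf j x i) (gf j y i)"
        by (intro coprime_divisors[OF gf_dvd gf_dvd qq_cop])
    qed
    have e3: "(\<Prod>l\<in>{1..k}. gf j l i) dvd t \<longleftrightarrow> (\<forall>l\<in>{1..k}. gf j l i dvd t)"
      by (rule prod_dvd_iff_pairwise_coprime[OF _ pc]) simp
    have "a dvd n" unfolding a_def by (intro div_dvd_self') simp
    then have "coprime a (\<Prod>l\<in>{1..k}. gf j l i)"
    proof (intro prod_coprime_right)
      fix l assume "l \<in> {1..k}"
      then have "coprime n (qq l)" using qq_cop_n coprime_commute by blast
      then show "coprime a (gf j l i)"
        by (intro coprime_divisors[OF \<open>a dvd n\<close> gf_dvd])
    qed
    then have "a dvd t \<and> (\<Prod>l\<in>{1..k}. gf j l i) dvd t \<longleftrightarrow> a * (\<Prod>l\<in>{1..k}. gf j l i) dvd t"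
      by (auto intro: divides_mult dest: dvd_mult_left dvd_mult_right)
    then show ?thesis using e3 by blast
  qed
  finally show "(j, i) [^]\<^bsub>ZM m n r\<^esub> t = \<one>\<^bsub>ZM m n r\<^esub> \<longleftrightarrow> n div gcd n j * (\<Prod>l\<in>{1..k}. gf j l i) dvd t"
    unfolding a_def .
qed

end

lemma ord_intmod:
  assumes q: "q > 0" and x: "x \<in> {0..<int q}"
  shows "group.ord (integer_mod_group q) x = q div gcd q (nat x)"
proof (rule ord_from[OF group_integer_mod_group])
  fix t :: nat
  have xe: "x = int (nat x)" using x by simp
  have "x [^]\<^bsub>integer_mod_group q\<^esub> t = \<one>\<^bsub>integer_mod_group q\<^esub> \<longleftrightarrow> int t * x mod int q = 0"
    by simp
  also have "\<dots> \<longleftrightarrow> int q dvd int t * x" by (simp add: dvd_eq_mod_eq_0)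
  also have "int t * x = int (t * nat x)" using xe by simp
  also have "int q dvd int (t * nat x) \<longleftrightarrow> q dvd t * nat x" by (simp only: of_nat_dvd_iff)
  also have "\<dots> \<longleftrightarrow> q div gcd q (nat x) dvd t" using q by (rule dvd_mult_iff_div_gcd)
  finally show "x [^]\<^bsub>integer_mod_group q\<^esub> t = \<one>\<^bsub>integer_mod_group q\<^esub> \<longleftrightarrow> q div gcd q (nat x) dvd t" .
qed

lemma psi_intmod:
  assumes q: "q > 0"
  shows "psi (integer_mod_group q) = (\<Sum>x<q. q div gcd q x)"
proof -
  have "psi (integer_mod_group q) = (\<Sum>x\<in>{0..<int q}. group.ord (integer_mod_group q) x)"
    using q by (simp add: psi_def carrier_integer_mod_group)
  also have "\<dots> = (\<Sum>x\<in>int ` {0..<q}. group.ord (integer_mod_group q) x)"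
    by (simp add: image_int_atLeastLessThan)
  also have "\<dots> = (\<Sum>x\<in>{0..<q}. group.ord (integer_mod_group q) (int x))"
    by (subst sum.reindex) auto
  also have "\<dots> = (\<Sum>x\<in>{0..<q}. q div gcd q x)"
    by (rule sum.cong) (use q ord_intmod in auto)
  finally show ?thesis by (simp add: lessThan_atLeast0)
qed

context zmc begin

lemma psi_ZM: "psi (ZM m n r) = (\<Sum>j<n. (n div gcd n j) * (\<Sum>i<m. \<Prod>l\<in>{1..k}. gf j l i))"
proof -
  have "psi (ZM m n r) = (\<Sum>x\<in>{0..<n} \<times> {0..<m}. group.ord (ZM m n r) x)"
    by (simp add: psi_def ZM_def)
  also have "\<dots> = (\<Sum>j\<in>{0..<n}. \<Sum>i\<in>{0..<m}. group.ord (ZM m n r) (j, i))"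
    by (subst sum.cartesian_product) simp
  also have "\<dots> = (\<Sum>j\<in>{0..<n}. \<Sum>i\<in>{0..<m}. (n div gcd n j) * (\<Prod>l\<in>{1..k}. gf j l i))"
    by (intro sum.cong refl) (simp add: ord_ZM)
  finally show ?thesis by (simp add: lessThan_atLeast0 sum_distrib_left)
qed

lemma gf_mod: "l \<in> {1..k} \<Longrightarrow> gf j l (i mod qq l) = gf j l i"
  using qq_pos[of l] by (simp add: gf_def gcd_mod_right)

definition psiq :: "nat \<Rightarrow> nat" where "psiq l = psi (integer_mod_group (qq l))"

lemma sum_gf: "l \<in> {1..k} \<Longrightarrow> (\<Sum>x<qq l. gf j l x) = (if [r ^ j = 1] (mod qq l) then psiq l else qq l)"
  using qq_pos[of l] by (simp add: gf_def psiq_def psi_intmod)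

lemma inner: "(\<Sum>i<m. \<Prod>l\<in>{1..k}. gf j l i) = (\<Prod>l\<in>{1..k}. if [r ^ j = 1] (mod qq l) then psiq l else qq l)"
proof -
  have "(\<Sum>i<(\<Prod>l\<in>{1..k}. qq l). \<Prod>l\<in>{1..k}. gf j l (i mod qq l)) = (\<Prod>l\<in>{1..k}. \<Sum>x<qq l. gf j l x)"
    by (rule crt_sum_prod) (use qq_cop qq_pos in auto)
  then have "(\<Sum>i<m. \<Prod>l\<in>{1..k}. gf j l (i mod qq l)) = (\<Prod>l\<in>{1..k}. \<Sum>x<qq l. gf j l x)"
    by (simp only: mprod'[symmetric])
  moreover have "(\<Sum>i<m. \<Prod>l\<in>{1..k}. gf j l (i mod qq l)) = (\<Sum>i<m. \<Prod>l\<in>{1..k}. gf j l i)"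
    by (intro sum.cong prod.cong refl) (simp add: gf_mod)
  moreover have "(\<Prod>l\<in>{1..k}. \<Sum>x<qq l. gf j l x) = (\<Prod>l\<in>{1..k}. if [r ^ j = 1] (mod qq l) then psiq l else qq l)"
    by (intro prod.cong refl) (simp add: sum_gf)
  ultimately show ?thesis by simp
qed

definition cT :: "nat set \<Rightarrow> int" where
  "cT T = (\<Prod>l\<in>{1..k} - T. int (qq l)) * (\<Prod>l\<in>T. int (psiq l) - int (qq l))"

definition EE :: "nat \<Rightarrow> nat set \<Rightarrow> bool" where
  "EE j T = (\<forall>l\<in>T. [r ^ j = 1] (mod qq l))"

lemma expand:
  "int (\<Prod>l\<in>{1..k}. if [r ^ j = 1] (mod qq l) then psiq l else qq l)
     = (\<Sum>T\<in>Pow {1..k}. if EE j T then cT T else 0)"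
proof -
  define a where "a l = (if [r ^ j = 1] (mod qq l) then int (psiq l) - int (qq l) else 0)" for l
  have "int (\<Prod>l\<in>{1..k}. if [r ^ j = 1] (mod qq l) then psiq l else qq l)
      = (\<Prod>l\<in>{1..k}. a l + int (qq l))"
    unfolding of_nat_prod by (intro prod.cong refl) (simp add: a_def)
  also have "\<dots> = (\<Sum>T\<in>Pow {1..k}. (\<Prod>l\<in>T. a l) * (\<Prod>l\<in>{1..k} - T. int (qq l)))"
    by (rule prod_add) simp
  also have "\<dots> = (\<Sum>T\<in>Pow {1..k}. if EE j T then cT T else 0)"
  proof (rule sum.cong[OF refl])
    fix T assume T: "T \<in> Pow {1..k}"
    then have fT: "finite T" by (meson PowD finite_atLeastAtMost finite_subset)
    show "(\<Prod>l\<in>T. a l) * (\<Prod>l\<in>{1..k} - T. int (qq l)) = (if EE j T then cT T else 0)"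
    proof (cases "EE j T")
      case True
      then have "(\<Prod>l\<in>T. a l) = (\<Prod>l\<in>T. int (psiq l) - int (qq l))"
        by (intro prod.cong refl) (simp add: a_def EE_def)
      then show ?thesis using True by (simp add: cT_def mult.commute)
    next
      case False
      then obtain l where "l \<in> T" "a l = 0" by (auto simp: EE_def a_def)
      then have "(\<Prod>l\<in>T. a l) = 0" using fT by (meson prod_zero)
      then show ?thesis using False by simp
    qed
  qed
  finally show ?thesis .
qed

end

context zmc begin

lemma EE_iff:
  assumes "T \<subseteq> {1..k}"
  shows "EE j T \<longleftrightarrow> Lcm ((\<lambda>i. ord (p i ^ \<alpha> i) r) ` T) dvd j"
  by (simp add: EE_def Lcm_dvd_iff ord_divides ord_divides' qq_def)

lemma ord_ZM0: "j < n \<Longrightarrow> group.ord (ZM m n r) (j, 0) = n div gcd n j"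
proof -
  assume j: "j < n"
  have "(\<Prod>l\<in>{1..k}. gf j l 0) = 1"
    by (intro prod.neutral ballI) (simp add: gf_def qq_pos)
  then show ?thesis using ord_ZM[OF j m0] by simp
qed

lemma sub_sum:
  assumes T: "T \<subseteq> {1..k}"
  shows "psi_sub (ZM m n r) (generate (ZM m n r)
            {ZM_b m n [^]\<^bsub>ZM m n r\<^esub> (Lcm ((\<lambda>i. ord (p i ^ \<alpha> i) r) ` T))})
         = (\<Sum>j<n. if EE j T then n div gcd n j else 0)"
proof -
  define e where "e = Lcm ((\<lambda>i. ord (p i ^ \<alpha> i) r) ` T)"
  define G where "G = ZM m n r"
  interpret grp: group G unfolding G_def by (rule group_ZM)
  have EEe: "EE j T \<longleftrightarrow> e dvd j" for j unfolding e_def using T by (rule EE_iff)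
  have "EE n T" unfolding EE_def
  proof
    fix l assume "l \<in> T"
    then have "l \<in> {1..k}" using T by blast
    then show "[r ^ n = 1] (mod qq l)" using rn qq_dvd cong_dvd_modulus_nat by blast
  qed
  then have en: "e dvd n" using EEe by blast
  define g where "g = ZM_b m n [^]\<^bsub>G\<^esub> e"
  have g: "g = (e mod n, 0)"
    unfolding g_def G_def ZM_b_def pow_ZM by (simp add: mod_mult_right_eq)
  have gc: "g \<in> carrier G" using g n0 m0 by (simp add: G_def ZM_def)
  have fin: "finite (carrier G)" by (simp add: G_def ZM_def)
  have gp: "g [^]\<^bsub>G\<^esub> t = (t * e mod n, 0)" for t :: nat
    unfolding g G_def pow_ZM by (simp add: mod_mult_right_eq)
  define H where "H = (\<lambda>j. (j, 0::nat)) ` {j \<in> {0..<n}. e dvd j}"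
  have gen: "generate G {g} = H"
  proof -
    have "generate G {g} = {g [^]\<^bsub>G\<^esub> t | t. t \<in> (UNIV :: nat set)}"
      by (rule grp.generate_pow_on_finite_carrier[OF fin gc])
    also have "\<dots> = H"
    proof
      show "{g [^]\<^bsub>G\<^esub> t | t. t \<in> (UNIV :: nat set)} \<subseteq> H"
      proof
        fix x assume "x \<in> {g [^]\<^bsub>G\<^esub> t | t. t \<in> (UNIV :: nat set)}"
        then obtain t where x: "x = (t * e mod n, 0)" using gp by auto
        have "e dvd t * e mod n" using en by (simp add: dvd_mod)
        then show "x \<in> H" unfolding H_def x using n0 by auto
      qed
    next
      show "H \<subseteq> {g [^]\<^bsub>G\<^esub> t | t. t \<in> (UNIV :: nat set)}"
      proof
        fix x assume "x \<in> H"
        then obtain j where x: "x = (j, 0)" and j: "j < n" "e dvd j" unfolding H_def by auto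
        then obtain c where c: "j = e * c" by (auto elim: dvdE)
        have "g [^]\<^bsub>G\<^esub> c = x" unfolding gp x c using j c by (simp add: mult.commute)
        then show "x \<in> {g [^]\<^bsub>G\<^esub> t | t. t \<in> (UNIV :: nat set)}" by blast
      qed
    qed
    finally show ?thesis .
  qed
  have sg: "subgroup H G" unfolding gen[symmetric] using gc by (intro grp.generate_is_subgroup) auto
  have grpH: "group (G\<lparr>carrier := H\<rparr>)" by (rule subgroup.subgroup_is_group[OF sg grp.is_group])
  have ordH: "group.ord (G\<lparr>carrier := H\<rparr>) x = group.ord G x" if x: "x \<in> H" for x
  proof (rule ord_from[OF grpH])
    fix t :: nat
    have xc: "x \<in> carrier G" using x sg subgroup.subset by blast
    have "x [^]\<^bsub>G\<lparr>carrier := H\<rparr>\<^esub> t = x [^]\<^bsub>G\<^esub> t" by (simp add: nat_pow_def)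
    then show "x [^]\<^bsub>G\<lparr>carrier := H\<rparr>\<^esub> t = \<one>\<^bsub>G\<lparr>carrier := H\<rparr>\<^esub> \<longleftrightarrow> group.ord G x dvd t"
      using grp.pow_eq_id[OF xc] by simp
  qed
  have "psi_sub G (generate G {g}) = (\<Sum>x\<in>H. group.ord G x)"
    unfolding psi_sub_def psi_def gen by (simp add: ordH)
  also have "\<dots> = (\<Sum>j\<in>{j \<in> {0..<n}. e dvd j}. group.ord G (j, 0))"
    unfolding H_def by (subst sum.reindex) (auto simp: inj_on_def)
  also have "\<dots> = (\<Sum>j\<in>{j \<in> {0..<n}. e dvd j}. n div gcd n j)"
    by (intro sum.cong refl) (simp add: G_def ord_ZM0)
  also have "\<dots> = (\<Sum>j\<in>{0..<n}. if e dvd j then n div gcd n j else 0)"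
    by (rule sum.inter_filter) simp
  also have "\<dots> = (\<Sum>j<n. if EE j T then n div gcd n j else 0)"
    by (simp add: EEe lessThan_atLeast0)
  finally show ?thesis by (simp add: G_def g_def e_def)
qed

end

context zmc begin

lemma main:
  "int (psi (ZM m n r)) = int m * int (psi (integer_mod_group n))
     + (\<Sum>T\<in>{T. T \<subseteq> {1..k} \<and> T \<noteq> {}}. cT T * int (psi_sub (ZM m n r)
             (generate (ZM m n r)
               {ZM_b m n [^]\<^bsub>ZM m n r\<^esub> (Lcm ((\<lambda>i. ord (p i ^ \<alpha> i) r) ` T))})))"
proof -
  define d where "d j = n div gcd n j" for j
  define W where "W T = (\<Sum>j<n. if EE j T then int (d j) else 0)" for T
  have "int (psi (ZM m n r)) = (\<Sum>j<n. int (d j) * int (\<Prod>l\<in>{1..k}. if [r ^ j = 1] (mod qq l) then psiq l else qq l))"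
    unfolding psi_ZM inner d_def by (simp add: of_nat_sum)
  also have "\<dots> = (\<Sum>j<n. int (d j) * (\<Sum>T\<in>Pow {1..k}. if EE j T then cT T else 0))"
    by (simp only: expand)
  also have "\<dots> = (\<Sum>j<n. \<Sum>T\<in>Pow {1..k}. cT T * (if EE j T then int (d j) else 0))"
    unfolding sum_distrib_left by (intro sum.cong refl) simp
  also have "\<dots> = (\<Sum>T\<in>Pow {1..k}. \<Sum>j<n. cT T * (if EE j T then int (d j) else 0))"
    by (rule sum.swap)
  also have "\<dots> = (\<Sum>T\<in>Pow {1..k}. cT T * W T)"
    by (simp add: W_def sum_distrib_left)
  also have "Pow {1..k} = insert {} {T. T \<subseteq> {1..k} \<and> T \<noteq> {}}" by auto
  also have "(\<Sum>T\<in>insert {} {T. T \<subseteq> {1..k} \<and> T \<noteq> {}}. cT T * W T)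
      = cT {} * W {} + (\<Sum>T\<in>{T. T \<subseteq> {1..k} \<and> T \<noteq> {}}. cT T * W T)"
    by (rule sum.insert) auto
  also have "cT {} = int m" by (simp add: cT_def mprod' of_nat_prod)
  also have "W {} = int (psi (integer_mod_group n))"
    by (simp add: W_def EE_def psi_intmod[OF n0] d_def of_nat_sum)
  also have "(\<Sum>T\<in>{T. T \<subseteq> {1..k} \<and> T \<noteq> {}}. cT T * W T)
      = (\<Sum>T\<in>{T. T \<subseteq> {1..k} \<and> T \<noteq> {}}. cT T * int (psi_sub (ZM m n r)
             (generate (ZM m n r)
               {ZM_b m n [^]\<^bsub>ZM m n r\<^esub> (Lcm ((\<lambda>i. ord (p i ^ \<alpha> i) r) ` T))})))"
  proof (rule sum.cong[OF refl])
    fix T assume "T \<in> {T. T \<subseteq> {1..k} \<and> T \<noteq> {}}"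
    then have T: "T \<subseteq> {1..k}" by blast
    show "cT T * W T = cT T * int (psi_sub (ZM m n r)
             (generate (ZM m n r)
               {ZM_b m n [^]\<^bsub>ZM m n r\<^esub> (Lcm ((\<lambda>i. ord (p i ^ \<alpha> i) r) ` T))}))"
    proof -
      have "W T = int (\<Sum>j<n. if EE j T then n div gcd n j else 0)"
        unfolding W_def d_def of_nat_sum by (intro sum.cong refl) simp
      then show ?thesis unfolding sub_sum[OF T] by simp
    qed
  qed
  finally show ?thesis .
qed

end

theorem proposition2p3:
  fixes m n r k :: nat and p \<alpha> :: "nat \<Rightarrow> nat"
  assumes "m > 0" and "n > 0" and "r > 0"
    and "gcd m n = 1" and "gcd m (r - 1) = 1"
    and "[r ^ n = 1] (mod m)"
    and "k \<ge> 1"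
    and "\<forall>i\<in>{1..k}. Factorial_Ring.prime (p i)"
    and "inj_on p {1..k}"
    and "\<forall>i\<in>{1..k}. \<alpha> i \<ge> 1"
    and "m = (\<Prod>i\<in>{1..k}. p i ^ \<alpha> i)"
  shows "int (psi (ZM m n r)) =
     int m * int (psi (integer_mod_group n))
     + (\<Sum>T\<in>{T. T \<subseteq> {1..k} \<and> T \<noteq> {}}.
          (\<Prod>i\<in>{1..k} - T. int (p i ^ \<alpha> i))
        * (\<Prod>i\<in>T. int (psi (integer_mod_group (p i ^ \<alpha> i))) - int (p i ^ \<alpha> i))
        * int (psi_sub (ZM m n r)
             (generate (ZM m n r)
               {ZM_b m n [^]\<^bsub>ZM m n r\<^esub> (Lcm ((\<lambda>i. ord (p i ^ \<alpha> i) r) ` T))})))"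
proof -
  interpret zmc m n r k p \<alpha> by (unfold_locales; fact assms)
  show ?thesis using main by (simp add: cT_def qq_def psiq_def)
qed

end
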